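(* Let $\mathbb I\subseteq\mathbb R$ be a time interval, $\mathcal X\subseteq\mathbb R^n$, $\mathcal S=\mathbb I\times\mathcal X$, and consider a pHDAE $$E\dot x + r = (J-R)z + (B-P)u,\qquad y = (B+P)^Tz + (S-N)u$$ (all coefficients evaluated at $(t,x)$) with Hamiltonian $\mathcal H$, as defined in the context. Let $\tilde{\mathcal X}\subseteq\mathbb R^{\tilde n}$, $\tilde{\mathcal S}:=\mathbb I\times\tilde{\mathcal X}$, let $\varphi\in C^1(\tilde{\mathcal S},\mathcal X)$ be such that $\tilde x\mapsto\varphi(t,\tilde x)$ is a local diffeomorphism, and let $U\in C(\tilde{\mathcal S},\mathbb R^{\ell,\ell})$ be pointwise invertible. For a function $F$ on $\mathcal S$ write $(F\circ\varphi)(t,\tilde x)=F(t,\varphi(t,\tilde x))$. Define $\tilde E=U^T(E\circ\varphi)\partial_{\tilde x}\varphi$, $\tilde J=U^T(J\circ\varphi)U$, $\tilde R=U^T(R\circ\varphi)U$, $\tilde B=U^T(B\circ\varphi)$, $\tilde P=U^T(P\circ\varphi)$, $\tilde z=U^{-1}(z\circ\varphi)$, $\tilde r=U^T\big(r\circ\varphi+(E\circ\varphi)\partial_t\varphi\big)$, and $\tilde{\mathcal H}:=\mathcal H\circ\varphi$, and consider the input-output DAE $$\tilde E\dot{\tilde x}+\tilde r=(\tilde J-\tilde R)\tilde z+(\tilde B-\tilde P)u,\qquad y=(\tilde B+\tilde P)^T\tilde z+(S\circ\varphi-N\circ\varphi)u.$$ Then this transformed system is a pHDAE with Hamiltonian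 $\tilde{\mathcal H}$, and to any solution $(\tilde x,u,y)$ of the transformed system corresponds a solution $(x,u,y)$ of the original system with $x(t)=\varphi(t,\tilde x(t))$. Furthermore, if $\varphi(t,\cdot)$ is a global diffeomorphism for every $t\in\mathbb I$, then the two systems are equivalent (their solutions correspond one-to-one via $x(t)=\varphi(t,\tilde x(t))$).
   Context: A pHDAE on $\mathcal S=\mathbb I\times\mathcal X$ is a system $E(t,x)\dot x + r(t,x) = (J(t,x)-R(t,x))z(t,x) + (B(t,x)-P(t,x))u$, $y = (B(t,x)+P(t,x))^Tz(t,x) + (S(t,x)-N(t,x))u$, with state $x(t)\in\mathcal X$, input/output $u(t),y(t)\in\mathbb R^m$, continuous coefficient functions $E:\mathcal S\to\mathbb R^{\ell,n}$, $r,z:\mathcal S\to\mathbb R^\ell$, $J,R:\mathcal S\to\mathbb R^{\ell,\ell}$, $B,P:\mathcal S\to\mathbb R^{\ell,m}$, $S,N:\mathcal S\to\mathbb R^{m,m}$, and a Hamiltonian $\mathcal H\in C^1(\mathcal S,\mathbb R)$, such that pointwise: (1) $\Gamma:=\begin{bmatrix} J & B\\ -B^T & N\end{bmatrix}$ satisfies $\Gamma=-\Gamma^T$ and $W:=\begin{bmatrix} R & P\\ P^T & S\end{bmatrix}$ satisfies $W=W^T\ge0$; (2) $\partial_x\mathcal H=E^Tz$ and $\partial_t\mathcal H=z^Tr$. For the transformed system the same definition applies with state space $\tilde{\mathcal X}$, coefficients $\tilde E,\tilde r,\tilde z,\tilde J,\tilde R,\tilde B,\tilde P,S\circ\varphi,N\circ\varphi$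 and Hamiltonian $\tilde{\mathcal H}$. *)

theory Defs
  imports "HOL-Analysis.Analysis"
begin

definition block_mat ::
  "real^'b^'a \<Rightarrow> real^'d^'a \<Rightarrow> real^'b^'c \<Rightarrow> real^'d^'c \<Rightarrow> real^('b+'d)^('a+'c)" where
  "block_mat A B C D = (\<chi> i j. case i of
      Inl a \<Rightarrow> (case j of Inl b \<Rightarrow> A$a$b | Inr d \<Rightarrow> B$a$d)
    | Inr c \<Rightarrow> (case j of Inl b \<Rightarrow> C$c$b | Inr d \<Rightarrow> D$c$d))"

definition psd_mat :: "real^'k^'k \<Rightarrow> bool" where
  "psd_mat M \<longleftrightarrow> (\<forall>v. 0 \<le> v \<bullet> (M *v v))"

definition C1_on :: "('a::euclidean_space \<Rightarrow> 'b::euclidean_space) \<Rightarrow> 'a set \<Rightarrow> bool" where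
  "C1_on f A \<longleftrightarrow> (\<exists>f'. (\<forall>v\<in>A. (f has_derivative blinfun_apply (f' v)) (at v)) \<and> continuous_on A f')"

definition local_diffeo_on :: "('a::euclidean_space \<Rightarrow> 'b::euclidean_space) \<Rightarrow> 'a set \<Rightarrow> 'b set \<Rightarrow> bool" where
  "local_diffeo_on f A B \<longleftrightarrow> f ` A \<subseteq> B \<and>
     (\<forall>x\<in>A. \<exists>V W g. open V \<and> x \<in> V \<and> V \<subseteq> A \<and> open W \<and> f ` V = W \<and>
        (\<forall>v\<in>V. g (f v) = v) \<and> (\<forall>w\<in>W. f (g w) = w) \<and> C1_on f V \<and> C1_on g W)"

definition diffeo_on :: "('a::euclidean_space \<Rightarrow> 'b::euclidean_space) \<Rightarrow> 'a set \<Rightarrow> 'b set \<Rightarrow> bool" where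
  "diffeo_on f A B \<longleftrightarrow> bij_betw f A B \<and> C1_on f A \<and> C1_on (inv_into A f) B"

definition pHDAE ::
  "real set \<Rightarrow> (real^'n) set \<Rightarrow>
   (real \<Rightarrow> real^'n \<Rightarrow> real^'n^'l) \<Rightarrow> (real \<Rightarrow> real^'n \<Rightarrow> real^'l) \<Rightarrow> (real \<Rightarrow> real^'n \<Rightarrow> real^'l) \<Rightarrow>
   (real \<Rightarrow> real^'n \<Rightarrow> real^'l^'l) \<Rightarrow> (real \<Rightarrow> real^'n \<Rightarrow> real^'l^'l) \<Rightarrow>
   (real \<Rightarrow> real^'n \<Rightarrow> real^'m^'l) \<Rightarrow> (real \<Rightarrow> real^'n \<Rightarrow> real^'m^'l) \<Rightarrow>
   (real \<Rightarrow> real^'n \<Rightarrow> real^'m^'m) \<Rightarrow> (real \<Rightarrow> real^'n \<Rightarrow> real^'m^'m) \<Rightarrow>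
   (real \<Rightarrow> real^'n \<Rightarrow> real) \<Rightarrow> bool" where
  "pHDAE I X E r z J R B P S N H \<longleftrightarrow>
     continuous_on (I \<times> X) (case_prod E) \<and> continuous_on (I \<times> X) (case_prod r) \<and>
     continuous_on (I \<times> X) (case_prod z) \<and> continuous_on (I \<times> X) (case_prod J) \<and>
     continuous_on (I \<times> X) (case_prod R) \<and> continuous_on (I \<times> X) (case_prod B) \<and>
     continuous_on (I \<times> X) (case_prod P) \<and> continuous_on (I \<times> X) (case_prod S) \<and>
     continuous_on (I \<times> X) (case_prod N) \<and>
     (\<forall>t\<in>I. \<forall>x\<in>X.
        (let \<Gamma> = block_mat (J t x) (B t x) (- transpose (B t x)) (N t x);
             W = block_mat (R t x) (P t x) (transpose (P t x)) (S t x)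
         in transpose \<Gamma> = - \<Gamma> \<and> transpose W = W \<and> psd_mat W) \<and>
        (case_prod H has_derivative
           (\<lambda>(dt, dx). dt * (z t x \<bullet> r t x) + (transpose (E t x) *v z t x) \<bullet> dx))
          (at (t, x) within I \<times> X))"

definition is_solution ::
  "real set \<Rightarrow> (real^'n) set \<Rightarrow>
   (real \<Rightarrow> real^'n \<Rightarrow> real^'n^'l) \<Rightarrow> (real \<Rightarrow> real^'n \<Rightarrow> real^'l) \<Rightarrow> (real \<Rightarrow> real^'n \<Rightarrow> real^'l) \<Rightarrow>
   (real \<Rightarrow> real^'n \<Rightarrow> real^'l^'l) \<Rightarrow> (real \<Rightarrow> real^'n \<Rightarrow> real^'l^'l) \<Rightarrow>
   (real \<Rightarrow> real^'n \<Rightarrow> real^'m^'l) \<Rightarrow> (real \<Rightarrow> real^'n \<Rightarrow> real^'m^'l) \<Rightarrow>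
   (real \<Rightarrow> real^'n \<Rightarrow> real^'m^'m) \<Rightarrow> (real \<Rightarrow> real^'n \<Rightarrow> real^'m^'m) \<Rightarrow>
   (real \<Rightarrow> real^'n) \<Rightarrow> (real \<Rightarrow> real^'m) \<Rightarrow> (real \<Rightarrow> real^'m) \<Rightarrow> bool" where
  "is_solution I X E r z J R B P S N x u y \<longleftrightarrow>
     (\<exists>x'. \<forall>t\<in>I. x t \<in> X \<and> (x has_vector_derivative x' t) (at t within I) \<and>
        E t (x t) *v x' t + r t (x t) = (J t (x t) - R t (x t)) *v z t (x t) + (B t (x t) - P t (x t)) *v u t \<and>
        y t = transpose (B t (x t) + P t (x t)) *v z t (x t) + (S t (x t) - N t (x t)) *v u t)"

end

theory Submission
  imports Defs
begin


lemma sum_UNIV_Plus: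
  "sum g (UNIV :: ('a::finite + 'b::finite) set) = sum (\<lambda>i. g (Inl i)) UNIV + sum (\<lambda>j. g (Inr j)) UNIV"
  by (subst UNIV_Plus_UNIV[symmetric], subst sum.Plus) (auto simp: o_def)

definition vl :: "real^('a::finite+'b::finite) \<Rightarrow> real^'a" where "vl v = (\<chi> i. v $ Inl i)"
definition vr :: "real^('a::finite+'b::finite) \<Rightarrow> real^'b" where "vr v = (\<chi> i. v $ Inr i)"
definition vpair :: "real^'a::finite \<Rightarrow> real^'b::finite \<Rightarrow> real^('a+'b)" where
  "vpair a b = (\<chi> k. case k of Inl i \<Rightarrow> a $ i | Inr j \<Rightarrow> b $ j)"

lemma vl_pair[simp]: "vl (vpair a b) = a" and vr_pair[simp]: "vr (vpair a b) = b"
  by (simp_all add: vl_def vr_def vpair_def)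

lemma block_quad:
  fixes A :: "real^'a^'a" and B :: "real^'c^'a" and C :: "real^'a^'c" and D :: "real^'c^'c"
  shows "v \<bullet> (block_mat A B C D *v v) = vl v \<bullet> (A *v vl v + B *v vr v) + vr v \<bullet> (C *v vl v + D *v vr v)"
  by (simp add: inner_vec_def matrix_vector_mult_def block_mat_def sum_UNIV_Plus vl_def vr_def
      sum_distrib_left algebra_simps)

lemma block_eq_iff:
  "block_mat A B C D = block_mat A' B' C' D' \<longleftrightarrow> A = A' \<and> B = B' \<and> C = C' \<and> D = D'"
proof
  assume h: "block_mat A B C D = block_mat A' B' C' D'"
  have e: "\<And>i j. block_mat A B C D $ i $ j = block_mat A' B' C' D' $ i $ j" using h by simp
  have "A $ i $ j = A' $ i $ j" for i j using e[of "Inl i" "Inl j"] by (simp add: block_mat_def)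
  moreover have "B $ i $ j = B' $ i $ j" for i j using e[of "Inl i" "Inr j"] by (simp add: block_mat_def)
  moreover have "C $ i $ j = C' $ i $ j" for i j using e[of "Inr i" "Inl j"] by (simp add: block_mat_def)
  moreover have "D $ i $ j = D' $ i $ j" for i j using e[of "Inr i" "Inr j"] by (simp add: block_mat_def)
  ultimately show "A = A' \<and> B = B' \<and> C = C' \<and> D = D'" by (simp add: vec_eq_iff)
qed simp

lemma block_transpose: "transpose (block_mat A B C D) = block_mat (transpose A) (transpose C) (transpose B) (transpose D)"
  by (auto simp: block_mat_def vec_eq_iff transpose_def split: sum.splits)

lemma block_uminus: "- block_mat A B C D = block_mat (-A) (-B) (-C) (-D)"
  by (auto simp: block_mat_def vec_eq_iff split: sum.splits)

lemma dot_transpose: "(x::real^'n) \<bullet> (transpose M *v y) = (M *v x) \<bullet> y"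
  by (metis dot_lmul_matrix inner_commute transpose_matrix_vector)

lemma transpose_neg[simp]: "transpose (- A) = - transpose (A::real^'n^'m)"
  by (simp add: transpose_def vec_eq_iff)

lemma dot_vm: "(a::real^'n) \<bullet> (w v* U) = (U *v a) \<bullet> w"
  by (metis dot_lmul_matrix inner_commute)

lemma mm_neg_r: "(A::real^'n^'m) ** (- B) = - (A ** B)"
  by (simp add: matrix_matrix_mult_def vec_eq_iff sum_negf)
lemma mm_neg_l: "(- A::real^'n^'m) ** B = - (A ** B)"
  by (simp add: matrix_matrix_mult_def vec_eq_iff sum_negf)

lemma skew_transform:
  fixes U J :: "real^'l^'l" and B :: "real^'m^'l" and N :: "real^'m^'m"
  assumes "transpose (block_mat J B (- transpose B) N) = - block_mat J B (- transpose B) N"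
  shows "transpose (block_mat (transpose U ** J ** U) (transpose U ** B) (- transpose (transpose U ** B)) N)
     = - block_mat (transpose U ** J ** U) (transpose U ** B) (- transpose (transpose U ** B)) N"
proof -
  from assms have J: "transpose J = - J" and N: "transpose N = - N"
    by (simp_all add: block_transpose block_uminus block_eq_iff)
  have "transpose (transpose U ** J ** U) = - (transpose U ** J ** U)"
    by (simp add: matrix_transpose_mul J matrix_mul_assoc)
       (simp add: mm_neg_r mm_neg_l)
  then show ?thesis
    by (simp add: block_transpose block_uminus block_eq_iff N)
qed

lemma psd_transform:
  fixes U R :: "real^'l^'l" and P :: "real^'m^'l" and S :: "real^'m^'m"
  assumes "transpose (block_mat R P (transpose P) S) = block_mat R P (transpose P) S"
    and "psd_mat (block_mat R P (transpose P) S)"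
  shows "transpose (block_mat (transpose U ** R ** U) (transpose U ** P) (transpose (transpose U ** P)) S)
     = block_mat (transpose U ** R ** U) (transpose U ** P) (transpose (transpose U ** P)) S"
    and "psd_mat (block_mat (transpose U ** R ** U) (transpose U ** P) (transpose (transpose U ** P)) S)"
proof -
  from assms(1) have R: "transpose R = R" and S: "transpose S = S"
    by (simp_all add: block_transpose block_eq_iff)
  show "transpose (block_mat (transpose U ** R ** U) (transpose U ** P) (transpose (transpose U ** P)) S)
     = block_mat (transpose U ** R ** U) (transpose U ** P) (transpose (transpose U ** P)) S"
    by (simp add: block_transpose block_eq_iff S matrix_transpose_mul R matrix_mul_assoc)
  show "psd_mat (block_mat (transpose U ** R ** U) (transpose U ** P) (transpose (transpose U ** P)) S)"
    unfolding psd_mat_def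
  proof
    fix v :: "real^('l+'m)"
    let ?a = "vl v" and ?b = "vr v"
    have "0 \<le> vpair (U *v ?a) ?b \<bullet> (block_mat R P (transpose P) S *v vpair (U *v ?a) ?b)"
      using assms(2) unfolding psd_mat_def by blast
    also have "\<dots> = v \<bullet> (block_mat (transpose U ** R ** U) (transpose U ** P) (transpose (transpose U ** P)) S *v v)"
      unfolding block_quad
      by (simp add: matrix_transpose_mul matrix_vector_mul_assoc[symmetric] dot_transpose
           flip: matrix_vector_right_distrib vector_matrix_left_distrib add: dot_vm)
    finally show "0 \<le> v \<bullet> (block_mat (transpose U ** R ** U) (transpose U ** P) (transpose (transpose U ** P)) S *v v)" .
  qed
qed


lemma minv:
  fixes A :: "'a::semiring_1^'n^'m"
  assumes "invertible A"
  shows "A ** matrix_inv A = mat 1" "matrix_inv A ** A = mat 1"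
proof -
  have "\<exists>A'. A ** A' = mat 1 \<and> A' ** A = mat 1" using assms unfolding invertible_def by blast
  from someI_ex[OF this] show "A ** matrix_inv A = mat 1" "matrix_inv A ** A = mat 1"
    unfolding matrix_inv_def by blast+
qed

lemma ham_alg:
  fixes U :: "real^'l^'l" and E :: "real^'n^'l" and F :: "real^'nt^'n"
  assumes "invertible U"
  shows "s * (z \<bullet> r) + (transpose E *v z) \<bullet> (s *\<^sub>R f + F *v v) =
    s * ((matrix_inv U *v z) \<bullet> (transpose U *v (r + E *v f))) +
    (transpose (transpose U ** E ** F) *v (matrix_inv U *v z)) \<bullet> v"
proof -
  have UU: "U *v (matrix_inv U *v z) = z"
    by (simp add: matrix_vector_mul_assoc minv(1)[OF assms])
  have 1: "(matrix_inv U *v z) \<bullet> (transpose U *v w) = z \<bullet> w" for w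
    by (simp only: dot_transpose UU)
  have 2: "(transpose (transpose U ** E ** F) *v (matrix_inv U *v z)) \<bullet> v = (transpose E *v z) \<bullet> (F *v v)"
    by (metis UU dot_transpose inner_commute matrix_vector_mul_assoc)
    have 3: "z \<bullet> (E *v f) = (transpose E *v z) \<bullet> f" by (metis dot_transpose transpose_transpose)
    show ?thesis unfolding 1 2 by (simp add: inner_add_right 3 distrib_left)
qed

lemma transpose_inj:
  fixes U :: "real^'l^'l"
  assumes "invertible U" "transpose U *v a = transpose U *v b"
  shows "a = b"
  using inj_matrix_vector_mult[OF transpose_invertible[OF assms(1)]] assms(2)
  by (simp add: inj_def)

lemma eq_alg:
  fixes U J R :: "real^'l^'l" and E :: "real^'n^'l" and F :: "real^'nt^'n" and B P :: "real^'m^'l"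
  assumes "invertible U"
  shows "(transpose U ** E ** F) *v w + transpose U *v (r + E *v f) =
      (transpose U ** J ** U - transpose U ** R ** U) *v (matrix_inv U *v z) + (transpose U ** B - transpose U ** P) *v u
    \<longleftrightarrow> E *v (f + F *v w) + r = (J - R) *v z + (B - P) *v u"
proof -
  have UU: "U *v (matrix_inv U *v z) = z"
    by (simp add: matrix_vector_mul_assoc minv(1)[OF assms])
  have L: "(transpose U ** E ** F) *v w + transpose U *v (r + E *v f) = transpose U *v (E *v (f + F *v w) + r)"
    by (simp only: matrix_vector_mul_assoc[symmetric] matrix_vector_right_distrib add_ac)
  have Rh: "(transpose U ** J ** U - transpose U ** R ** U) *v (matrix_inv U *v z) + (transpose U ** B - transpose U ** P) *v u
     = transpose U *v ((J - R) *v z + (B - P) *v u)"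
    by (simp only: matrix_vector_mul_assoc[symmetric] matrix_vector_right_distrib matrix_vector_mult_diff_distrib
        matrix_vector_mult_diff_rdistrib UU)
  show ?thesis unfolding L Rh using transpose_inj[OF assms] by metis
qed

lemma out_alg:
  fixes U :: "real^'l^'l" and B P :: "real^'m^'l"
  assumes "invertible U"
  shows "transpose (transpose U ** B + transpose U ** P) *v (matrix_inv U *v z) = transpose (B + P) *v z"
proof -
  have UU: "U *v (matrix_inv U *v z) = z"
    by (simp add: matrix_vector_mul_assoc minv(1)[OF assms])
  show ?thesis
    by (simp only: matrix_add_ldistrib[symmetric] matrix_transpose_mul transpose_transpose matrix_vector_mul_assoc[symmetric] UU)
qed



lemma slice_deriv:
  fixes \<phi> :: "real \<Rightarrow> real^'nt \<Rightarrow> real^'n"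
  assumes "open Xt" "t \<in> I" "w \<in> Xt"
    and "(case_prod \<phi> has_derivative (\<lambda>(s, v). s *\<^sub>R ft + F *v v)) (at (t, w) within I \<times> Xt)"
  shows "(\<phi> t has_derivative (\<lambda>v. F *v v)) (at w)"
proof -
  have 1: "((\<lambda>v. (t, v)) has_derivative (\<lambda>v. (0, v))) (at w within Xt)"
    by (auto intro!: derivative_eq_intros)
  have 2: "(case_prod \<phi> has_derivative (\<lambda>(s, v). s *\<^sub>R ft + F *v v)) (at (t, w) within (\<lambda>v. (t, v)) ` Xt)"
    by (rule has_derivative_subset[OF assms(4)]) (use assms in auto)
  have "((\<lambda>v. case_prod \<phi> (t, v)) has_derivative (\<lambda>v. (\<lambda>(s, v). s *\<^sub>R ft + F *v v) (0, v))) (at w within Xt)"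
    using has_derivative_in_compose[OF 1 2] by simp
  then have "(\<phi> t has_derivative (\<lambda>v. F *v v)) (at w within Xt)" by simp
  then show ?thesis using at_within_open[OF assms(3,1)] by simp
qed

lemma time_slice_deriv:
  fixes \<phi> :: "real \<Rightarrow> real^'nt \<Rightarrow> real^'n"
  assumes "t \<in> I" "w \<in> Xt"
    and "(case_prod \<phi> has_derivative (\<lambda>(s, v). s *\<^sub>R ft + F *v v)) (at (t, w) within I \<times> Xt)"
  shows "((\<lambda>s. \<phi> s w) has_derivative (\<lambda>h. h *\<^sub>R ft)) (at t within I)"
proof -
  have 1: "((\<lambda>s. (s, w)) has_derivative (\<lambda>h. (h, 0))) (at t within I)"
    by (auto intro!: derivative_eq_intros)
  have 2: "(case_prod \<phi> has_derivative (\<lambda>(s, v). s *\<^sub>R ft + F *v v)) (at (t, w) within (\<lambda>s. (s, w)) ` I)"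
    by (rule has_derivative_subset[OF assms(3)]) (use assms in auto)
  show ?thesis
    using has_derivative_in_compose[OF 1 2] by simp
qed

lemma invertible_from_diffeo:
  fixes f :: "real^'nt \<Rightarrow> real^'n" and A :: "real^'nt^'n"
  assumes "local_diffeo_on f Xt X" "w \<in> Xt" "(f has_derivative (\<lambda>v. A *v v)) (at w)"
  shows "invertible A"
proof -
  obtain V W g where V: "open V" "w \<in> V" "V \<subseteq> Xt" and W: "open W" "f ` V = W"
    and gf: "\<forall>v\<in>V. g (f v) = v" and fg: "\<forall>y\<in>W. f (g y) = y" and C1g: "C1_on g W"
    using assms(1,2) unfolding local_diffeo_on_def by blast
  have y0: "f w \<in> W" using V W by auto
  from C1g obtain G where G: "\<forall>y\<in>W. (g has_derivative blinfun_apply (G y)) (at y)"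
    unfolding C1_on_def by blast
  have dg: "(g has_derivative blinfun_apply (G (f w))) (at (f w))" using G y0 by blast
  have gw: "g (f w) = w" using gf V by blast
  have "((\<lambda>v. g (f v)) has_derivative (\<lambda>v. G (f w) (A *v v))) (at w)"
    using has_derivative_compose[OF assms(3) dg] .
  then have "((\<lambda>v. v) has_derivative (\<lambda>v. G (f w) (A *v v))) (at w)"
    by (rule has_derivative_transform_within_open[OF _ V(1) V(2)]) (use gf in auto)
  from has_derivative_unique[OF this has_derivative_ident]
  have e1: "(\<lambda>v. G (f w) (A *v v)) = (\<lambda>v. v)" .
  have df: "(f has_derivative (\<lambda>v. A *v v)) (at (g (f w)))" using assms(3) gw by simp
  have "((\<lambda>y. f (g y)) has_derivative (\<lambda>y. A *v G (f w) y)) (at (f w))"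
    using has_derivative_compose[OF dg df] .
  then have "((\<lambda>y. y) has_derivative (\<lambda>y. A *v G (f w) y)) (at (f w))"
    by (rule has_derivative_transform_within_open[OF _ W(1) y0]) (use fg in auto)
  from has_derivative_unique[OF this has_derivative_ident]
  have e2: "(\<lambda>y. A *v G (f w) y) = (\<lambda>y. y)" .
  have lin: "linear (blinfun_apply (G (f w)))"
    by (simp add: bounded_linear.linear blinfun.bounded_linear_right)
  have c1: "(*v) A \<circ> blinfun_apply (G (f w)) = id" using e2 by (simp add: o_def id_def)
  have c2: "blinfun_apply (G (f w)) \<circ> (*v) A = id" using e1 by (simp add: o_def id_def)
  have "invertible (matrix ((*v) A))"
    using matrix_invertible[OF matrix_vector_mul_linear, of A] lin c1 c2 by blast
  then show ?thesis by simp
qed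



lemma deriv_lip:
  fixes f :: "real \<Rightarrow> 'b::real_normed_vector"
  assumes "(f has_derivative (\<lambda>h. h *\<^sub>R f')) (at t within I)"
  shows "\<exists>C>0. \<exists>d>0. \<forall>s\<in>I. \<bar>s - t\<bar> < d \<longrightarrow> norm (f s - f t) \<le> C * \<bar>s - t\<bar>"
proof -
  from assms[unfolded has_derivative_within_alt] obtain d where d: "d > 0"
    "\<forall>s\<in>I. norm (s - t) < d \<longrightarrow> norm (f s - f t - (s - t) *\<^sub>R f') \<le> 1 * norm (s - t)"
    by (meson zero_less_one)
  have "norm (f s - f t) \<le> (norm f' + 1) * \<bar>s - t\<bar>" if "s \<in> I" "\<bar>s - t\<bar> < d" for s
  proof -
    have "norm (f s - f t) \<le> norm (f s - f t - (s - t) *\<^sub>R f') + norm ((s - t) *\<^sub>R f')"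
      by (metis diff_add_cancel norm_triangle_ineq)
    also have "\<dots> \<le> \<bar>s - t\<bar> + \<bar>s - t\<bar> * norm f'"
      using d(2) that by auto
    finally show ?thesis by (simp add: algebra_simps)
  qed
  moreover have "norm f' + 1 > 0" by (simp add: add_nonneg_pos)
  ultimately show ?thesis using d(1) by blast
qed

lemma dist_pair_le: "dist (a::'a::metric_space, b::'b::metric_space) (c, d) \<le> dist a c + dist b d"
  unfolding dist_Pair_Pair by (rule real_sqrt_sum_squares_triangle_ineq[of "dist a c" 0 0 "dist b d", simplified])



lemma implicit_deriv:
  fixes \<phi> :: "real \<Rightarrow> real^'nt \<Rightarrow> real^'n" and \<phi>t :: "real \<Rightarrow> real^'nt \<Rightarrow> real^'n"
    and \<phi>x :: "real \<Rightarrow> real^'nt \<Rightarrow> real^'nt^'n" and x :: "real \<Rightarrow> real^'n" and xt :: "real \<Rightarrow> real^'nt"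
  assumes Xt: "open Xt" and t0: "t0 \<in> I"
    and phi_deriv: "\<And>t w. t \<in> I \<Longrightarrow> w \<in> Xt \<Longrightarrow>
        (case_prod \<phi> has_derivative (\<lambda>(s, v). s *\<^sub>R \<phi>t t w + \<phi>x t w *v v)) (at (t, w) within I \<times> Xt)"
    and cont: "continuous_on (I \<times> Xt) (case_prod \<phi>x)"
    and inv: "invertible (\<phi>x t0 (xt t0))"
    and inj: "\<And>s. s \<in> I \<Longrightarrow> inj_on (\<phi> s) Xt"
    and xtX: "\<And>s. s \<in> I \<Longrightarrow> xt s \<in> Xt"
    and xteq: "\<And>s. s \<in> I \<Longrightarrow> \<phi> s (xt s) = x s"
    and xd: "(x has_vector_derivative x') (at t0 within I)"
  shows "(xt has_vector_derivative (matrix_inv (\<phi>x t0 (xt t0)) *v (x' - \<phi>t t0 (xt t0)))) (at t0 within I)"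
proof -
  define a where "a = xt t0"
  define A where "A = \<phi>x t0 a"
  define L where "L = matrix_inv A"
  have aX: "a \<in> Xt" using xtX t0 a_def by simp
  have LA: "L ** A = mat 1" and AL: "A ** L = mat 1"
    using minv[OF inv] by (simp_all add: L_def A_def a_def)
  have LAv: "L *v (A *v v) = v" for v by (simp add: matrix_vector_mul_assoc LA)
  have ALv: "A *v (L *v v) = v" for v by (simp add: matrix_vector_mul_assoc AL)
  define K where "K = onorm ((*v) L) + 1"
  have Kpos: "K > 0" unfolding K_def using onorm_pos_le[OF matrix_vector_mul_bounded_linear[of L]] by linarith
  have KL: "norm (L *v y) \<le> K * norm y" for y
  proof -
    have "norm (L *v y) \<le> onorm ((*v) L) * norm y" by (rule onorm[OF matrix_vector_mul_bounded_linear])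
    also have "\<dots> \<le> K * norm y" unfolding K_def by (simp add: mult_right_mono)
    finally show ?thesis .
  qed
  define c where "c = real CARD('n) * real CARD('nt)"
  have cpos: "c > 0" unfolding c_def by simp
  define \<epsilon> where "\<epsilon> = 1 / (2 * K * c)"
  have epos: "\<epsilon> > 0" unfolding \<epsilon>_def using Kpos cpos by simp
  obtain \<delta>1 where d1: "\<delta>1 > 0"
    "\<And>p. p \<in> I \<times> Xt \<Longrightarrow> dist p (t0, a) < \<delta>1 \<Longrightarrow> dist (case_prod \<phi>x p) A < \<epsilon>"
    using cont[unfolded continuous_on_iff] t0 aX epos A_def by fastforce
  obtain r where r: "r > 0" "cball a r \<subseteq> Xt" using open_contains_cball Xt aX by blast
  define \<rho> where "\<rho> = min r (\<delta>1 / 2)"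
  have rho: "\<rho> > 0" "cball a \<rho> \<subseteq> Xt" using r d1 by (auto simp: \<rho>_def)
  define G where "G s w = w - L *v (\<phi> s w - x s)" for s w
  have contr: "norm (G s w1 - G s w2) \<le> 1/2 * norm (w1 - w2)"
    if s: "s \<in> I" "\<bar>s - t0\<bar> < \<delta>1 / 2" and w: "w1 \<in> cball a \<rho>" "w2 \<in> cball a \<rho>" for s w1 w2
  proof (rule differentiable_bound[of "cball a \<rho>" "G s" "\<lambda>w v. v - L *v (\<phi>x s w *v v)"])
    show "convex (cball a \<rho>)" by simp
    show "w1 \<in> cball a \<rho>" "w2 \<in> cball a \<rho>" by fact+
  next
    fix w assume w: "w \<in> cball a \<rho>"
    then have wX: "w \<in> Xt" using rho by blast
    have "(\<phi> s has_derivative (\<lambda>v. \<phi>x s w *v v)) (at w)"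
      by (rule slice_deriv[OF Xt s(1) wX phi_deriv[OF s(1) wX]])
    from bounded_linear.has_derivative[OF matrix_vector_mul_bounded_linear has_derivative_diff[OF this has_derivative_const]]
    have "((\<lambda>w. L *v (\<phi> s w - x s)) has_derivative (\<lambda>v. L *v (\<phi>x s w *v v - 0))) (at w)" .
    from has_derivative_diff[OF has_derivative_ident this]
    have "(G s has_derivative (\<lambda>v. v - L *v (\<phi>x s w *v v))) (at w)" unfolding G_def by simp
    then show "(G s has_derivative (\<lambda>v. v - L *v (\<phi>x s w *v v))) (at w within cball a \<rho>)"
      by (rule has_derivative_at_withinI)
    have "dist (s, w) (t0, a) \<le> dist s t0 + dist w a" by (rule dist_pair_le)
    also have "\<dots> < \<delta>1" using s w unfolding \<rho>_def by (auto simp: dist_real_def dist_commute)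
    finally have "dist (\<phi>x s w) A < \<epsilon>" using d1(2)[of "(s, w)"] s wX by simp
    then have nA: "norm (A - \<phi>x s w) \<le> \<epsilon>" by (simp add: dist_norm norm_minus_commute)
    have comp: "\<bar>(A - \<phi>x s w) $ i $ j\<bar> \<le> \<epsilon>" for i j
    proof -
      have "\<bar>(A - \<phi>x s w) $ i $ j\<bar> \<le> norm ((A - \<phi>x s w) $ i)" by (rule component_le_norm_cart)
      also have "\<dots> \<le> norm (A - \<phi>x s w)" by (rule Finite_Cartesian_Product.norm_nth_le)
      finally show ?thesis using nA by linarith
    qed
    have on: "onorm ((*v) (A - \<phi>x s w)) \<le> c * \<epsilon>"
      using onorm_le_matrix_component[of "A - \<phi>x s w" \<epsilon>, OF comp] by (simp add: c_def)
    show "onorm (\<lambda>v. v - L *v (\<phi>x s w *v v)) \<le> 1/2"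
    proof (rule onorm_le)
      fix v
      have "v - L *v (\<phi>x s w *v v) = L *v ((A - \<phi>x s w) *v v)"
        by (simp add: matrix_vector_mult_diff_rdistrib matrix_vector_mult_diff_distrib LAv)
      then have "norm (v - L *v (\<phi>x s w *v v)) \<le> K * norm ((A - \<phi>x s w) *v v)" using KL by simp
      also have "\<dots> \<le> K * (c * \<epsilon> * norm v)"
      proof -
        have "norm ((A - \<phi>x s w) *v v) \<le> onorm ((*v) (A - \<phi>x s w)) * norm v"
          by (rule onorm[OF matrix_vector_mul_bounded_linear])
        also have "\<dots> \<le> c * \<epsilon> * norm v" by (rule mult_right_mono[OF on norm_ge_zero])
        finally show ?thesis using Kpos by (simp add: mult_left_mono)
      qed
      also have "\<dots> = 1/2 * norm v" unfolding \<epsilon>_def using Kpos cpos by (simp add: field_simps)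
      finally show "norm (v - L *v (\<phi>x s w *v v)) \<le> 1/2 * norm v" .
    qed
  qed
  define h where "h s = \<phi> s a - x s" for s
  have xd': "(x has_derivative (\<lambda>k. k *\<^sub>R x')) (at t0 within I)"
    using xd by (simp add: has_vector_derivative_def)
  have "(h has_derivative (\<lambda>k. k *\<^sub>R \<phi>t t0 a - k *\<^sub>R x')) (at t0 within I)"
    unfolding h_def by (rule has_derivative_diff[OF time_slice_deriv[OF t0 aX phi_deriv[OF t0 aX]] xd'])
  then have "(h has_derivative (\<lambda>k. k *\<^sub>R (\<phi>t t0 a - x'))) (at t0 within I)"
    by (simp add: scaleR_diff_right)
  from deriv_lip[OF this] obtain C1 d3 where C1: "C1 > 0" "d3 > 0"
    "\<And>s. s \<in> I \<Longrightarrow> \<bar>s - t0\<bar> < d3 \<Longrightarrow> norm (h s - h t0) \<le> C1 * \<bar>s - t0\<bar>" by blast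
  have ht0: "h t0 = 0" using xteq[OF t0] by (simp add: h_def a_def)
  define C where "C = 2 * K * C1"
  have Cpos: "C > 0" using Kpos C1 by (simp add: C_def)
  define \<delta> where "\<delta> = min (\<delta>1 / 2) (min d3 (\<rho> / (2 * K * C1)))"
  have dpos: "\<delta> > 0" using d1 C1 rho Kpos by (simp add: \<delta>_def)
  have lip: "norm (xt s - a) \<le> C * \<bar>s - t0\<bar>" if s: "s \<in> I" "\<bar>s - t0\<bar> < \<delta>" for s
  proof -
    have s1: "\<bar>s - t0\<bar> < \<delta>1 / 2" "\<bar>s - t0\<bar> < d3" "\<bar>s - t0\<bar> < \<rho> / (2 * K * C1)"
      using s(2) by (auto simp: \<delta>_def)
    have hs: "norm (h s) \<le> C1 * \<bar>s - t0\<bar>" using C1(3)[OF s(1) s1(2)] ht0 by simp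
    have "K * norm (h s) \<le> K * (C1 * \<bar>s - t0\<bar>)" using hs Kpos by (simp add: mult_left_mono)
    also have "\<dots> \<le> \<rho> / 2"
    proof -
      have "C1 * \<bar>s - t0\<bar> \<le> C1 * (\<rho> / (2 * K * C1))" by (rule less_imp_le[OF mult_strict_left_mono[OF s1(3) C1(1)]])
      also have "\<dots> = \<rho> / (2 * K)" using C1 by simp
      finally show ?thesis using Kpos by (simp add: field_simps)
    qed
    finally have Kh: "K * norm (h s) \<le> \<rho> / 2" .
    have Ga: "norm (G s a - a) \<le> K * norm (h s)"
      using KL[of "h s"] by (simp add: G_def h_def)
    have aa: "a \<in> cball a \<rho>" using rho by simp
    have tri: "norm (G s w - a) \<le> 1/2 * norm (w - a) + K * norm (h s)" if "w \<in> cball a \<rho>" for w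
    proof -
      have "norm (G s w - a) \<le> norm (G s w - G s a) + norm (G s a - a)"
        by (metis diff_add_cancel norm_triangle_ineq add_diff_eq)
      also have "\<dots> \<le> 1/2 * norm (w - a) + K * norm (h s)"
        using contr[OF s(1) s1(1) that aa] Ga by linarith
      finally show ?thesis .
    qed
    have maps: "G s ` cball a \<rho> \<subseteq> cball a \<rho>"
    proof
      fix y assume "y \<in> G s ` cball a \<rho>"
      then obtain w where w: "w \<in> cball a \<rho>" "y = G s w" by blast
      have "norm (w - a) \<le> \<rho>" using w(1) by (simp add: dist_norm norm_minus_commute)
      then have "norm (G s w - a) \<le> \<rho>" using tri[OF w(1)] Kh by linarith
      then show "y \<in> cball a \<rho>" using w(2) by (simp add: dist_norm norm_minus_commute)
    qed
    have "\<exists>!w\<in>cball a \<rho>. G s w = w"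
    proof (rule Banach_fix[of "cball a \<rho>" "1/2"])
      show "complete (cball a \<rho>)" by (simp add: complete_eq_closed)
      show "cball a \<rho> \<noteq> {}" using aa by blast
      show "G s ` cball a \<rho> \<subseteq> cball a \<rho>" by (rule maps)
      fix w1 w2 assume "w1 \<in> cball a \<rho>" "w2 \<in> cball a \<rho>"
      then show "dist (G s w1) (G s w2) \<le> 1/2 * dist w1 w2"
        using contr[OF s(1) s1(1)] by (simp add: dist_norm)
    qed simp_all
    then obtain w where w: "w \<in> cball a \<rho>" "G s w = w" by blast
    have "L *v (\<phi> s w - x s) = 0" using w(2) by (simp add: G_def)
    then have "A *v (L *v (\<phi> s w - x s)) = 0" by simp
    then have "\<phi> s w = x s" by (simp add: ALv)
    moreover have wX: "w \<in> Xt" using w(1) rho by blast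
    ultimately have "w = xt s"
      using inj[OF s(1)] xtX[OF s(1)] xteq[OF s(1)] by (metis inj_on_def)
    have "norm (w - a) \<le> 1/2 * norm (w - a) + K * norm (h s)"
      using tri[OF w(1)] w(2) by simp
    then have "norm (w - a) \<le> 2 * K * norm (h s)" by linarith
    also have "\<dots> \<le> 2 * K * (C1 * \<bar>s - t0\<bar>)" using hs Kpos by (simp add: mult_left_mono)
    finally show ?thesis using \<open>w = xt s\<close> by (simp add: C_def)
  qed
  define v where "v = L *v (x' - \<phi>t t0 a)"
  have "(xt has_derivative (\<lambda>k. k *\<^sub>R v)) (at t0 within I)"
    unfolding has_derivative_within_alt
  proof (intro conjI allI impI)
    show "bounded_linear (\<lambda>k. k *\<^sub>R v)" by (rule bounded_linear_scaleR_left)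
    fix e :: real assume e: "e > 0"
    define e1 where "e1 = e / (K * (2 + C))"
    have e1: "e1 > 0" using e Kpos Cpos by (simp add: e1_def)
    from phi_deriv[OF t0 aX, unfolded has_derivative_within_alt] e1 obtain d4 where d4: "d4 > 0"
      "\<forall>p\<in>I \<times> Xt. norm (p - (t0, a)) < d4 \<longrightarrow>
        norm (case_prod \<phi> p - case_prod \<phi> (t0, a) - (\<lambda>(s, v). s *\<^sub>R \<phi>t t0 a + \<phi>x t0 a *v v) (p - (t0, a)))
          \<le> e1 * norm (p - (t0, a))" by blast
    from xd'[unfolded has_derivative_within_alt] e1 obtain d2 where d2: "d2 > 0"
      "\<forall>s\<in>I. norm (s - t0) < d2 \<longrightarrow> norm (x s - x t0 - (s - t0) *\<^sub>R x') \<le> e1 * norm (s - t0)" by blast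
    define d where "d = min \<delta> (min d2 (d4 / (1 + C)))"
    have dpos': "d > 0" using dpos d2 d4 Cpos by (simp add: d_def)
    have "norm (xt s - xt t0 - (s - t0) *\<^sub>R v) \<le> e * norm (s - t0)" if s: "s \<in> I" "norm (s - t0) < d" for s
    proof -
      have sd: "\<bar>s - t0\<bar> < \<delta>" "\<bar>s - t0\<bar> < d2" "\<bar>s - t0\<bar> < d4 / (1 + C)"
        using s(2) by (auto simp: d_def)
      have l: "norm (xt s - a) \<le> C * \<bar>s - t0\<bar>" by (rule lip[OF s(1) sd(1)])
      have "norm ((s, xt s) - (t0, a)) = dist (s, xt s) (t0, a)" by (simp add: dist_norm)
      also have "\<dots> \<le> dist s t0 + dist (xt s) a" by (rule dist_pair_le)
      also have "\<dots> \<le> (1 + C) * \<bar>s - t0\<bar>" using l by (simp add: dist_norm dist_real_def algebra_simps)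
      finally have np: "norm ((s, xt s) - (t0, a)) \<le> (1 + C) * \<bar>s - t0\<bar>" .
      also have "\<dots> < d4"
        using sd(3) Cpos by (simp add: field_simps)
      finally have "norm ((s, xt s) - (t0, a)) < d4" .
      then have E1: "norm (x s - x t0 - ((s - t0) *\<^sub>R \<phi>t t0 a + A *v (xt s - a))) \<le> e1 * ((1 + C) * \<bar>s - t0\<bar>)"
        using d4(2)[rule_format, of "(s, xt s)"] s(1) xtX[OF s(1)] xteq[OF s(1)] xteq[OF t0] np e1
        by (simp add: a_def A_def) (smt (verit) mult_left_mono)
      have E2: "norm (x s - x t0 - (s - t0) *\<^sub>R x') \<le> e1 * \<bar>s - t0\<bar>"
        using d2(2) s(1) sd(2) by simp
      define q where "q = A *v (xt s - a) - (s - t0) *\<^sub>R (x' - \<phi>t t0 a)"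
      have nq: "norm q \<le> e1 * (2 + C) * \<bar>s - t0\<bar>"
      proof -
        have "q = (x s - x t0 - (s - t0) *\<^sub>R x') - (x s - x t0 - ((s - t0) *\<^sub>R \<phi>t t0 a + A *v (xt s - a)))"
          unfolding q_def by (simp add: algebra_simps)
        then have "norm q \<le> norm (x s - x t0 - (s - t0) *\<^sub>R x') + norm (x s - x t0 - ((s - t0) *\<^sub>R \<phi>t t0 a + A *v (xt s - a)))"
          by (metis norm_triangle_ineq4)
        also have "\<dots> \<le> e1 * \<bar>s - t0\<bar> + e1 * ((1 + C) * \<bar>s - t0\<bar>)" using E1 E2 by linarith
        finally show ?thesis by (simp add: algebra_simps)
      qed
      have "xt s - xt t0 - (s - t0) *\<^sub>R v = L *v q"
        unfolding q_def v_def a_def[symmetric]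
        by (simp add: matrix_vector_mult_diff_distrib LAv matrix_vector_mult_scaleR)
      then have "norm (xt s - xt t0 - (s - t0) *\<^sub>R v) \<le> K * norm q" using KL by simp
      also have "\<dots> \<le> K * (e1 * (2 + C) * \<bar>s - t0\<bar>)" using nq Kpos by (simp add: mult_left_mono)
      also have "\<dots> = (e1 * (K * (2 + C))) * \<bar>s - t0\<bar>" by (simp add: ac_simps)
      also have "e1 * (K * (2 + C)) = e" unfolding e1_def using Kpos Cpos by simp
      finally show ?thesis by simp
    qed
    then show "\<exists>d>0. \<forall>y\<in>I. norm (y - t0) < d \<longrightarrow> norm (xt y - xt t0 - (y - t0) *\<^sub>R v) \<le> e * norm (y - t0)"
      using dpos' by blast
  qed
  then show ?thesis by (simp add: has_vector_derivative_def v_def L_def A_def a_def)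
qed



lemma cont_mm[continuous_intros]:
  fixes f :: "'a::topological_space \<Rightarrow> real^'n^'m" and g :: "'a \<Rightarrow> real^'k^'n"
  assumes "continuous_on S f" "continuous_on S g"
  shows "continuous_on S (\<lambda>x. f x ** g x)"
  unfolding matrix_matrix_mult_def
  by (intro continuous_intros assms)

lemma cont_mv[continuous_intros]:
  fixes f :: "'a::topological_space \<Rightarrow> real^'n^'m" and g :: "'a \<Rightarrow> real^'n"
  assumes "continuous_on S f" "continuous_on S g"
  shows "continuous_on S (\<lambda>x. f x *v g x)"
  unfolding matrix_vector_mult_def
  by (intro continuous_intros assms)

lemma cont_tr[continuous_intros]:
  fixes f :: "'a::topological_space \<Rightarrow> real^'n^'m"
  assumes "continuous_on S f"
  shows "continuous_on S (\<lambda>x. transpose (f x))"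
  unfolding transpose_def
  by (intro continuous_intros assms)

lemma cont_det[continuous_intros]:
  fixes f :: "'a::topological_space \<Rightarrow> real^'n^'n"
  assumes "continuous_on S f"
  shows "continuous_on S (\<lambda>x. det (f x))"
  unfolding det_def
  by (intro continuous_intros assms)

lemma minv_cramer:
  fixes A :: "real^'n^'n"
  assumes "invertible A"
  shows "matrix_inv A *v b = (\<chi> k. det(\<chi> i j. if j=k then b$i else A$i$j) / det A)"
proof -
  have d: "det A \<noteq> 0" using assms invertible_det_nz by blast
  have "A *v (matrix_inv A *v b) = b"
    using assms by (simp add: matrix_vector_mul_assoc minv(1))
  then show ?thesis using cramer[OF d] by blast
qed

lemma cont_minv[continuous_intros]:
  fixes f :: "'a::topological_space \<Rightarrow> real^'n^'n" and g :: "'a \<Rightarrow> real^'n"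
  assumes "continuous_on S f" "continuous_on S g" "\<And>x. x \<in> S \<Longrightarrow> invertible (f x)"
  shows "continuous_on S (\<lambda>x. matrix_inv (f x) *v g x)"
proof -
  have "continuous_on S (\<lambda>x. (\<chi> k. det(\<chi> i j. if j=k then g x$i else f x$i$j) / det (f x)))"
    using assms(3) apply (intro continuous_intros assms)
    subgoal for k i j by (cases "j = k") (simp_all add: continuous_intros assms)
    using invertible_det_nz by blast
  then show ?thesis
    by (rule continuous_on_cong[THEN iffD1, rotated 2]) (auto simp: minv_cramer assms)
qed
theorem theorem2:
  fixes I :: "real set" and X :: "(real^'n) set" and Xt :: "(real^'nt) set"
    and E :: "real \<Rightarrow> real^'n \<Rightarrow> real^'n^'l" and r z :: "real \<Rightarrow> real^'n \<Rightarrow> real^'l"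
    and J R :: "real \<Rightarrow> real^'n \<Rightarrow> real^'l^'l" and B P :: "real \<Rightarrow> real^'n \<Rightarrow> real^'m^'l"
    and S N :: "real \<Rightarrow> real^'n \<Rightarrow> real^'m^'m" and H :: "real \<Rightarrow> real^'n \<Rightarrow> real"
    and \<phi> :: "real \<Rightarrow> real^'nt \<Rightarrow> real^'n"
    and \<phi>t :: "real \<Rightarrow> real^'nt \<Rightarrow> real^'n" and \<phi>x :: "real \<Rightarrow> real^'nt \<Rightarrow> real^'nt^'n"
    and U :: "real \<Rightarrow> real^'nt \<Rightarrow> real^'l^'l"
  assumes I: "is_interval I"
    and X: "open X" and Xt: "open Xt"
    and ph: "pHDAE I X E r z J R B P S N H"
    and phi_maps: "\<And>t xt. t \<in> I \<Longrightarrow> xt \<in> Xt \<Longrightarrow> \<phi> t xt \<in> X"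
    and phi_deriv: "\<And>t xt. t \<in> I \<Longrightarrow> xt \<in> Xt \<Longrightarrow>
        (case_prod \<phi> has_derivative (\<lambda>(s, v). s *\<^sub>R \<phi>t t xt + \<phi>x t xt *v v)) (at (t, xt) within I \<times> Xt)"
    and phi_C1: "continuous_on (I \<times> Xt) (case_prod \<phi>t)" "continuous_on (I \<times> Xt) (case_prod \<phi>x)"
    and phi_loc: "\<And>t. t \<in> I \<Longrightarrow> local_diffeo_on (\<phi> t) Xt X"
    and U_cont: "continuous_on (I \<times> Xt) (case_prod U)"
    and U_inv: "\<And>t xt. t \<in> I \<Longrightarrow> xt \<in> Xt \<Longrightarrow> invertible (U t xt)"
  defines "Et \<equiv> \<lambda>t xt. transpose (U t xt) ** E t (\<phi> t xt) ** \<phi>x t xt"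
    and "Jt \<equiv> \<lambda>t xt. transpose (U t xt) ** J t (\<phi> t xt) ** U t xt"
    and "Rt \<equiv> \<lambda>t xt. transpose (U t xt) ** R t (\<phi> t xt) ** U t xt"
    and "Bt \<equiv> \<lambda>t xt. transpose (U t xt) ** B t (\<phi> t xt)"
    and "Pt \<equiv> \<lambda>t xt. transpose (U t xt) ** P t (\<phi> t xt)"
    and "zt \<equiv> \<lambda>t xt. matrix_inv (U t xt) *v z t (\<phi> t xt)"
    and "rt \<equiv> \<lambda>t xt. transpose (U t xt) *v (r t (\<phi> t xt) + E t (\<phi> t xt) *v \<phi>t t xt)"
    and "St \<equiv> \<lambda>t xt. S t (\<phi> t xt)"
    and "Nt \<equiv> \<lambda>t xt. N t (\<phi> t xt)"
    and "Ht \<equiv> \<lambda>t xt. H t (\<phi> t xt)"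
  shows "pHDAE I Xt Et rt zt Jt Rt Bt Pt St Nt Ht
    \<and> (\<forall>xt u y. is_solution I Xt Et rt zt Jt Rt Bt Pt St Nt xt u y \<longrightarrow>
          is_solution I X E r z J R B P S N (\<lambda>t. \<phi> t (xt t)) u y)
    \<and> ((\<forall>t\<in>I. diffeo_on (\<phi> t) Xt X) \<longrightarrow>
        (\<forall>x u y. is_solution I X E r z J R B P S N x u y \<longrightarrow>
           (\<exists>xt. is_solution I Xt Et rt zt Jt Rt Bt Pt St Nt xt u y \<and> (\<forall>t\<in>I. x t = \<phi> t (xt t))))
        \<and> (\<forall>xt1 xt2 u y. is_solution I Xt Et rt zt Jt Rt Bt Pt St Nt xt1 u y \<longrightarrow>
              is_solution I Xt Et rt zt Jt Rt Bt Pt St Nt xt2 u y \<longrightarrow>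
              (\<forall>t\<in>I. \<phi> t (xt1 t) = \<phi> t (xt2 t)) \<longrightarrow> (\<forall>t\<in>I. xt1 t = xt2 t)))"
proof -
  have phi_cont: "continuous_on (I \<times> Xt) (\<lambda>p. \<phi> (fst p) (snd p))"
  proof -
    have "continuous_on (I \<times> Xt) (case_prod \<phi>)"
      unfolding continuous_on_eq_continuous_within
      using has_derivative_continuous[OF phi_deriv] by auto
    then show ?thesis by (simp add: case_prod_beta')
  qed
  have maps2: "(\<lambda>p. (fst p, \<phi> (fst p) (snd p))) ` (I \<times> Xt) \<subseteq> I \<times> X"
    using phi_maps by auto
  have comp: "continuous_on (I \<times> Xt) (\<lambda>p. F (fst p) (\<phi> (fst p) (snd p)))"
    if "continuous_on (I \<times> X) (case_prod F)" for F :: "real \<Rightarrow> real^'n \<Rightarrow> 'z::topological_space"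
  proof -
    have "continuous_on (I \<times> Xt) (\<lambda>p. (fst p, \<phi> (fst p) (snd p)))"
      by (intro continuous_intros phi_cont)
    from continuous_on_compose2[OF that this maps2] show ?thesis by simp
  qed
  have cE: "continuous_on (I \<times> X) (case_prod E)" and cr: "continuous_on (I \<times> X) (case_prod r)"
    and cz: "continuous_on (I \<times> X) (case_prod z)" and cJ: "continuous_on (I \<times> X) (case_prod J)"
    and cR: "continuous_on (I \<times> X) (case_prod R)" and cB: "continuous_on (I \<times> X) (case_prod B)"
    and cP: "continuous_on (I \<times> X) (case_prod P)" and cS: "continuous_on (I \<times> X) (case_prod S)"
    and cN: "continuous_on (I \<times> X) (case_prod N)"
    using ph unfolding pHDAE_def by blast+
  have pw: "\<And>t x. t \<in> I \<Longrightarrow> x \<in> X \<Longrightarrow>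
        (let \<Gamma> = block_mat (J t x) (B t x) (- transpose (B t x)) (N t x);
             W = block_mat (R t x) (P t x) (transpose (P t x)) (S t x)
         in transpose \<Gamma> = - \<Gamma> \<and> transpose W = W \<and> psd_mat W) \<and>
        (case_prod H has_derivative
           (\<lambda>(dt, dx). dt * (z t x \<bullet> r t x) + (transpose (E t x) *v z t x) \<bullet> dx))
          (at (t, x) within I \<times> X)"
    using ph unfolding pHDAE_def by blast
  have cU: "continuous_on (I \<times> Xt) (\<lambda>p. U (fst p) (snd p))" using U_cont by (simp add: case_prod_beta')
  have cpt: "continuous_on (I \<times> Xt) (\<lambda>p. \<phi>t (fst p) (snd p))" using phi_C1(1) by (simp add: case_prod_beta')
  have cpx: "continuous_on (I \<times> Xt) (\<lambda>p. \<phi>x (fst p) (snd p))" using phi_C1(2) by (simp add: case_prod_beta')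
  have part1: "pHDAE I Xt Et rt zt Jt Rt Bt Pt St Nt Ht"
    unfolding pHDAE_def
  proof (intro conjI ballI)
    have cE': "continuous_on (I \<times> Xt) (\<lambda>p. E (fst p) (\<phi> (fst p) (snd p)))" by (rule comp[OF cE])
    have cr': "continuous_on (I \<times> Xt) (\<lambda>p. r (fst p) (\<phi> (fst p) (snd p)))" by (rule comp[OF cr])
    have cz': "continuous_on (I \<times> Xt) (\<lambda>p. z (fst p) (\<phi> (fst p) (snd p)))" by (rule comp[OF cz])
    have cJ': "continuous_on (I \<times> Xt) (\<lambda>p. J (fst p) (\<phi> (fst p) (snd p)))" by (rule comp[OF cJ])
    have cR': "continuous_on (I \<times> Xt) (\<lambda>p. R (fst p) (\<phi> (fst p) (snd p)))" by (rule comp[OF cR])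
    have cB': "continuous_on (I \<times> Xt) (\<lambda>p. B (fst p) (\<phi> (fst p) (snd p)))" by (rule comp[OF cB])
    have cP': "continuous_on (I \<times> Xt) (\<lambda>p. P (fst p) (\<phi> (fst p) (snd p)))" by (rule comp[OF cP])
    have cS': "continuous_on (I \<times> Xt) (\<lambda>p. S (fst p) (\<phi> (fst p) (snd p)))" by (rule comp[OF cS])
    have cN': "continuous_on (I \<times> Xt) (\<lambda>p. N (fst p) (\<phi> (fst p) (snd p)))" by (rule comp[OF cN])
    show "continuous_on (I \<times> Xt) (case_prod Et)"
      unfolding Et_def case_prod_beta' by (intro cont_mm cont_tr cU cE' cpx)
    show "continuous_on (I \<times> Xt) (case_prod rt)"
      unfolding rt_def case_prod_beta' by (intro cont_mv cont_tr cU continuous_on_add cr' cE' cpt)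
    show "continuous_on (I \<times> Xt) (case_prod zt)"
      unfolding zt_def case_prod_beta' by (rule cont_minv[OF cU cz']) (auto intro: U_inv)
    show "continuous_on (I \<times> Xt) (case_prod Jt)"
      unfolding Jt_def case_prod_beta' by (intro cont_mm cont_tr cU cJ')
    show "continuous_on (I \<times> Xt) (case_prod Rt)"
      unfolding Rt_def case_prod_beta' by (intro cont_mm cont_tr cU cR')
    show "continuous_on (I \<times> Xt) (case_prod Bt)"
      unfolding Bt_def case_prod_beta' by (intro cont_mm cont_tr cU cB')
    show "continuous_on (I \<times> Xt) (case_prod Pt)"
      unfolding Pt_def case_prod_beta' by (intro cont_mm cont_tr cU cP')
    show "continuous_on (I \<times> Xt) (case_prod St)"
      unfolding St_def case_prod_beta' by (rule cS')
    show "continuous_on (I \<times> Xt) (case_prod Nt)"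
      unfolding Nt_def case_prod_beta' by (rule cN')
  next
    fix t w assume t: "t \<in> I" and w: "w \<in> Xt"
    define y where "y = \<phi> t w"
    have yX: "y \<in> X" using phi_maps[OF t w] by (simp add: y_def)
    note pwy = pw[OF t yX]
    have sk: "transpose (block_mat (J t y) (B t y) (- transpose (B t y)) (N t y)) = - block_mat (J t y) (B t y) (- transpose (B t y)) (N t y)"
      and sy: "transpose (block_mat (R t y) (P t y) (transpose (P t y)) (S t y)) = block_mat (R t y) (P t y) (transpose (P t y)) (S t y)"
      and ps: "psd_mat (block_mat (R t y) (P t y) (transpose (P t y)) (S t y))"
      and dH: "(case_prod H has_derivative
           (\<lambda>(dt, dx). dt * (z t y \<bullet> r t y) + (transpose (E t y) *v z t y) \<bullet> dx)) (at (t, y) within I \<times> X)"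
      using pwy by (simp_all add: Let_def)
    show "let \<Gamma> = block_mat (Jt t w) (Bt t w) (- transpose (Bt t w)) (Nt t w);
             W = block_mat (Rt t w) (Pt t w) (transpose (Pt t w)) (St t w)
         in transpose \<Gamma> = - \<Gamma> \<and> transpose W = W \<and> psd_mat W"
      unfolding Let_def Jt_def Bt_def Nt_def Rt_def Pt_def St_def y_def[symmetric]
      using skew_transform[OF sk, of "U t w"] psd_transform[OF sy ps, of "U t w"] by simp
    show "(case_prod Ht has_derivative (\<lambda>(dt, dx). dt * (zt t w \<bullet> rt t w) + (transpose (Et t w) *v zt t w) \<bullet> dx))
        (at (t, w) within I \<times> Xt)"
    proof -
      have dF: "((\<lambda>p. (fst p, \<phi> (fst p) (snd p))) has_derivative (\<lambda>q. (fst q, fst q *\<^sub>R \<phi>t t w + \<phi>x t w *v snd q)))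
          (at (t, w) within I \<times> Xt)"
      proof (rule has_derivative_Pair)
        show "(fst has_derivative fst) (at (t, w) within I \<times> Xt)" by (rule has_derivative_fst[OF has_derivative_ident])
        show "((\<lambda>p. \<phi> (fst p) (snd p)) has_derivative (\<lambda>q. fst q *\<^sub>R \<phi>t t w + \<phi>x t w *v snd q)) (at (t, w) within I \<times> Xt)"
          using phi_deriv[OF t w] by (simp add: case_prod_beta')
      qed
      have dH': "(case_prod H has_derivative
           (\<lambda>(dt, dx). dt * (z t y \<bullet> r t y) + (transpose (E t y) *v z t y) \<bullet> dx))
           (at ((\<lambda>p. (fst p, \<phi> (fst p) (snd p))) (t, w)) within (\<lambda>p. (fst p, \<phi> (fst p) (snd p))) ` (I \<times> Xt))"
        using has_derivative_subset[OF dH maps2] by (simp add: y_def)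
      from has_derivative_in_compose[OF dF dH']
      have "((\<lambda>p. H (fst p) (\<phi> (fst p) (snd p))) has_derivative
          (\<lambda>q. fst q * (z t y \<bullet> r t y) + (transpose (E t y) *v z t y) \<bullet> (fst q *\<^sub>R \<phi>t t w + \<phi>x t w *v snd q)))
          (at (t, w) within I \<times> Xt)" by simp
      moreover have "(\<lambda>q. fst q * (z t y \<bullet> r t y) + (transpose (E t y) *v z t y) \<bullet> (fst q *\<^sub>R \<phi>t t w + \<phi>x t w *v snd q))
          = (\<lambda>(dt, dx). dt * (zt t w \<bullet> rt t w) + (transpose (Et t w) *v zt t w) \<bullet> dx)"
        unfolding zt_def rt_def Et_def y_def using ham_alg[OF U_inv[OF t w]] by (auto simp: fun_eq_iff)
      moreover have "case_prod Ht = (\<lambda>p. H (fst p) (\<phi> (fst p) (snd p)))"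
        by (simp add: Ht_def case_prod_beta')
      ultimately show ?thesis by simp
    qed
  qed
  have part2: "\<forall>xt u y. is_solution I Xt Et rt zt Jt Rt Bt Pt St Nt xt u y \<longrightarrow>
          is_solution I X E r z J R B P S N (\<lambda>t. \<phi> t (xt t)) u y"
  proof (intro allI impI)
    fix xt u y assume "is_solution I Xt Et rt zt Jt Rt Bt Pt St Nt xt u y"
    then obtain xt' where sol: "\<And>t. t \<in> I \<Longrightarrow> xt t \<in> Xt \<and> (xt has_vector_derivative xt' t) (at t within I) \<and>
        Et t (xt t) *v xt' t + rt t (xt t) = (Jt t (xt t) - Rt t (xt t)) *v zt t (xt t) + (Bt t (xt t) - Pt t (xt t)) *v u t \<and>
        y t = transpose (Bt t (xt t) + Pt t (xt t)) *v zt t (xt t) + (St t (xt t) - Nt t (xt t)) *v u t"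
      unfolding is_solution_def by blast
    show "is_solution I X E r z J R B P S N (\<lambda>t. \<phi> t (xt t)) u y"
      unfolding is_solution_def
    proof (intro exI[of _ "\<lambda>t. \<phi>t t (xt t) + \<phi>x t (xt t) *v xt' t"] ballI conjI)
      fix t assume t: "t \<in> I"
      have xtX: "xt t \<in> Xt" using sol[OF t] by blast
      have Ui: "invertible (U t (xt t))" by (rule U_inv[OF t xtX])
      show "\<phi> t (xt t) \<in> X" by (rule phi_maps[OF t xtX])
      have d1: "((\<lambda>s. (s, xt s)) has_derivative (\<lambda>h. (h, h *\<^sub>R xt' t))) (at t within I)"
        using sol[OF t] by (auto intro!: has_derivative_Pair has_derivative_ident simp: has_vector_derivative_def)
      have d2: "(case_prod \<phi> has_derivative (\<lambda>(s, v). s *\<^sub>R \<phi>t t (xt t) + \<phi>x t (xt t) *v v))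
          (at ((\<lambda>s. (s, xt s)) t) within (\<lambda>s. (s, xt s)) ` I)"
        using has_derivative_subset[OF phi_deriv[OF t xtX], of "(\<lambda>s. (s, xt s)) ` I"] sol by auto
      from has_derivative_in_compose[OF d1 d2]
      have "((\<lambda>s. \<phi> s (xt s)) has_derivative (\<lambda>h. h *\<^sub>R \<phi>t t (xt t) + \<phi>x t (xt t) *v (h *\<^sub>R xt' t))) (at t within I)"
        by simp
      moreover have "(\<lambda>h. h *\<^sub>R \<phi>t t (xt t) + \<phi>x t (xt t) *v (h *\<^sub>R xt' t)) = (\<lambda>h. h *\<^sub>R (\<phi>t t (xt t) + \<phi>x t (xt t) *v xt' t))"
        by (simp add: fun_eq_iff scaleR_right_distrib matrix_vector_mult_scaleR)
      ultimately show "((\<lambda>t. \<phi> t (xt t)) has_vector_derivative \<phi>t t (xt t) + \<phi>x t (xt t) *v xt' t) (at t within I)"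
        by (simp add: has_vector_derivative_def)
      have eq: "Et t (xt t) *v xt' t + rt t (xt t) = (Jt t (xt t) - Rt t (xt t)) *v zt t (xt t) + (Bt t (xt t) - Pt t (xt t)) *v u t"
        using sol[OF t] by blast
      then show "E t (\<phi> t (xt t)) *v (\<phi>t t (xt t) + \<phi>x t (xt t) *v xt' t) + r t (\<phi> t (xt t)) =
          (J t (\<phi> t (xt t)) - R t (\<phi> t (xt t))) *v z t (\<phi> t (xt t)) + (B t (\<phi> t (xt t)) - P t (\<phi> t (xt t))) *v u t"
        unfolding Et_def rt_def Jt_def Rt_def zt_def Bt_def Pt_def eq_alg[OF Ui] .
      have "y t = transpose (Bt t (xt t) + Pt t (xt t)) *v zt t (xt t) + (St t (xt t) - Nt t (xt t)) *v u t"
        using sol[OF t] by blast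
      then show "y t = transpose (B t (\<phi> t (xt t)) + P t (\<phi> t (xt t))) *v z t (\<phi> t (xt t)) +
          (S t (\<phi> t (xt t)) - N t (\<phi> t (xt t))) *v u t"
        unfolding Bt_def Pt_def zt_def St_def Nt_def out_alg[OF Ui] .
    qed
  qed
  have part3: "(\<forall>t\<in>I. diffeo_on (\<phi> t) Xt X) \<longrightarrow>
        (\<forall>x u y. is_solution I X E r z J R B P S N x u y \<longrightarrow>
           (\<exists>xt. is_solution I Xt Et rt zt Jt Rt Bt Pt St Nt xt u y \<and> (\<forall>t\<in>I. x t = \<phi> t (xt t))))
        \<and> (\<forall>xt1 xt2 u y. is_solution I Xt Et rt zt Jt Rt Bt Pt St Nt xt1 u y \<longrightarrow>
              is_solution I Xt Et rt zt Jt Rt Bt Pt St Nt xt2 u y \<longrightarrow>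
              (\<forall>t\<in>I. \<phi> t (xt1 t) = \<phi> t (xt2 t)) \<longrightarrow> (\<forall>t\<in>I. xt1 t = xt2 t))"
  proof (intro impI conjI allI)
    assume dif: "\<forall>t\<in>I. diffeo_on (\<phi> t) Xt X"
    have inj: "inj_on (\<phi> t) Xt" and img: "\<phi> t ` Xt = X" if "t \<in> I" for t
      using dif that unfolding diffeo_on_def bij_betw_def by auto
    {
      fix xt1 xt2 u y
      assume s1: "is_solution I Xt Et rt zt Jt Rt Bt Pt St Nt xt1 u y"
        and s2: "is_solution I Xt Et rt zt Jt Rt Bt Pt St Nt xt2 u y"
        and e: "\<forall>t\<in>I. \<phi> t (xt1 t) = \<phi> t (xt2 t)"
      show "\<forall>t\<in>I. xt1 t = xt2 t"
      proof
        fix t assume t: "t \<in> I"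
        have "xt1 t \<in> Xt" "xt2 t \<in> Xt" using s1 s2 t unfolding is_solution_def by blast+
        then show "xt1 t = xt2 t" using inj[OF t] e t by (meson inj_onD)
      qed
    }
    fix x u y assume "is_solution I X E r z J R B P S N x u y"
    then obtain x' where sol: "\<And>t. t \<in> I \<Longrightarrow> x t \<in> X \<and> (x has_vector_derivative x' t) (at t within I) \<and>
        E t (x t) *v x' t + r t (x t) = (J t (x t) - R t (x t)) *v z t (x t) + (B t (x t) - P t (x t)) *v u t \<and>
        y t = transpose (B t (x t) + P t (x t)) *v z t (x t) + (S t (x t) - N t (x t)) *v u t"
      unfolding is_solution_def by blast
    define xt where "xt t = inv_into Xt (\<phi> t) (x t)" for t
    have xtX: "xt t \<in> Xt" and xteq: "\<phi> t (xt t) = x t" if t: "t \<in> I" for t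
    proof -
      have "x t \<in> \<phi> t ` Xt" using sol[OF t] img[OF t] by blast
      then show "xt t \<in> Xt" "\<phi> t (xt t) = x t" unfolding xt_def
        by (auto intro: inv_into_into f_inv_into_f)
    qed
    have invx: "invertible (\<phi>x t w)" if "t \<in> I" "w \<in> Xt" for t w
      by (rule invertible_from_diffeo[OF phi_loc[OF that(1)] that(2) slice_deriv[OF Xt that phi_deriv[OF that]]])
    define xt' where "xt' t = matrix_inv (\<phi>x t (xt t)) *v (x' t - \<phi>t t (xt t))" for t
    show "\<exists>xt. is_solution I Xt Et rt zt Jt Rt Bt Pt St Nt xt u y \<and> (\<forall>t\<in>I. x t = \<phi> t (xt t))"
    proof (intro exI[of _ xt] conjI ballI)
      show "x t = \<phi> t (xt t)" if "t \<in> I" for t using xteq[OF that] by simp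
      show "is_solution I Xt Et rt zt Jt Rt Bt Pt St Nt xt u y"
        unfolding is_solution_def
      proof (intro exI[of _ xt'] ballI conjI)
        fix t assume t: "t \<in> I"
        show "xt t \<in> Xt" by (rule xtX[OF t])
        have Ui: "invertible (U t (xt t))" by (rule U_inv[OF t xtX[OF t]])
        show "(xt has_vector_derivative xt' t) (at t within I)"
          unfolding xt'_def
          by (rule implicit_deriv[OF Xt t phi_deriv phi_C1(2) invx[OF t xtX[OF t]] inj xtX xteq])
             (use sol[OF t] in auto)
        have px: "\<phi>t t (xt t) + \<phi>x t (xt t) *v xt' t = x' t"
          unfolding xt'_def
          by (simp add: matrix_vector_mul_assoc minv(1)[OF invx[OF t xtX[OF t]]])
        have eq: "E t (\<phi> t (xt t)) *v (\<phi>t t (xt t) + \<phi>x t (xt t) *v xt' t) + r t (\<phi> t (xt t)) =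
          (J t (\<phi> t (xt t)) - R t (\<phi> t (xt t))) *v z t (\<phi> t (xt t)) + (B t (\<phi> t (xt t)) - P t (\<phi> t (xt t))) *v u t"
          unfolding px xteq[OF t] using sol[OF t] by blast
        then show "Et t (xt t) *v xt' t + rt t (xt t) = (Jt t (xt t) - Rt t (xt t)) *v zt t (xt t) + (Bt t (xt t) - Pt t (xt t)) *v u t"
          unfolding Et_def rt_def Jt_def Rt_def zt_def Bt_def Pt_def eq_alg[OF Ui] .
        have "y t = transpose (B t (\<phi> t (xt t)) + P t (\<phi> t (xt t))) *v z t (\<phi> t (xt t)) +
          (S t (\<phi> t (xt t)) - N t (\<phi> t (xt t))) *v u t"
          unfolding xteq[OF t] using sol[OF t] by blast
        then show "y t = transpose (Bt t (xt t) + Pt t (xt t)) *v zt t (xt t) + (St t (xt t) - Nt t (xt t)) *v u t"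
          unfolding Bt_def Pt_def zt_def St_def Nt_def out_alg[OF Ui] .
      qed
    qed
  qed
  show ?thesis using part1 part2 part3 by blast
qed


end
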